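(* Let $\gamma>0$ and $\lambda_k\coloneqq-\gamma+ik$ for $k\in\mathbb{N}$. Let $A$ be the diagonal operator on $\ell^2$ given by $A(\zeta_k)_{k\in\mathbb{N}}=(\lambda_k\zeta_k)_{k\in\mathbb{N}}$ with domain $D(A)=\{(\zeta_k)\in\ell^2:(\lambda_k\zeta_k)\in\ell^2\}$ (which generates an exponentially stable $C_0$-semigroup). Then for every $\alpha>0$, \[ \liminf_{t\to\infty} t^{\alpha/2}\big\|e^{A^{-1}t}(-A)^{-\alpha}\big\|\ge\Big(\frac{\alpha}{2e\gamma}\Big)^{\alpha/2}. \]
   Context: $\ell^2$ is the Hilbert space of square-summable complex sequences. For this diagonal operator, $e^{A^{-1}t}(-A)^{-\alpha}$ is the diagonal operator with entries $e^{t/\lambda_k}(-\lambda_k)^{-\alpha}$ (principal branch). *)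

theory Defs
  imports "HOL-Analysis.Analysis"
begin

definition l2 :: "(nat \<Rightarrow> complex) set" where
  "l2 = {x. summable (\<lambda>k. (cmod (x k))^2)}"

definition l2_norm :: "(nat \<Rightarrow> complex) \<Rightarrow> real" where
  "l2_norm x = sqrt (\<Sum>k. (cmod (x k))^2)"

definition l2_op_norm :: "((nat \<Rightarrow> complex) \<Rightarrow> (nat \<Rightarrow> complex)) \<Rightarrow> real" where
  "l2_op_norm T = Sup ((\<lambda>x. l2_norm (T x)) ` {x \<in> l2. l2_norm x \<le> 1})"

definition diag_op :: "(nat \<Rightarrow> complex) \<Rightarrow> (nat \<Rightarrow> complex) \<Rightarrow> (nat \<Rightarrow> complex)" where
  "diag_op d x = (\<lambda>k. d k * x k)"

definition lam :: "real \<Rightarrow> nat \<Rightarrow> complex" where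
  "lam \<gamma> k = - complex_of_real \<gamma> + \<i> * of_nat k"

text \<open>The operator e^{A^{-1} t} (-A)^{-alpha}: diagonal with entries
  e^{t/lambda_k} (-lambda_k)^{-alpha}, principal branch (powr uses the principal Ln).\<close>
definition semigroup_frac_op :: "real \<Rightarrow> real \<Rightarrow> real \<Rightarrow> (nat \<Rightarrow> complex) \<Rightarrow> (nat \<Rightarrow> complex)" where
  "semigroup_frac_op \<gamma> \<alpha> t =
     diag_op (\<lambda>k. exp (complex_of_real t / lam \<gamma> k) * (- lam \<gamma> k) powr (- complex_of_real \<alpha>))"

end

theory Submission imports Defs "HOL-Real_Asymp.Real_Asymp" begin

lemma diag_bound:
  assumes M: "\<And>k. cmod (d k) \<le> M" and x: "x \<in> l2"
  shows "diag_op d x \<in> l2 \<and> l2_norm (diag_op d x) \<le> M * l2_norm x"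
proof -
  have M0: "M \<ge> 0" using M[of 0] norm_ge_zero order_trans by blast
  have sx: "summable (\<lambda>k. (cmod (x k))^2)" using x by (simp add: l2_def)
  have le: "(cmod (diag_op d x k))^2 \<le> M^2 * (cmod (x k))^2" for k
  proof -
    have "cmod (diag_op d x k) \<le> M * cmod (x k)"
      by (simp add: diag_op_def norm_mult mult_right_mono M)
    then have "(cmod (diag_op d x k))^2 \<le> (M * cmod (x k))^2"
      by (intro power_mono) auto
    then show ?thesis by (simp add: power_mult_distrib)
  qed
  have s2: "summable (\<lambda>k. M^2 * (cmod (x k))^2)" using sx by (rule summable_mult)
  have sd: "summable (\<lambda>k. (cmod (diag_op d x k))^2)"
    by (rule summable_comparison_test[OF _ s2]) (use le in auto)
  have "(\<Sum>k. (cmod (diag_op d x k))^2) \<le> (\<Sum>k. M^2 * (cmod (x k))^2)"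
    by (rule suminf_le[OF le sd s2])
  also have "\<dots> = M^2 * (\<Sum>k. (cmod (x k))^2)" using sx by (rule suminf_mult)
  finally have "sqrt (\<Sum>k. (cmod (diag_op d x k))^2) \<le> sqrt (M^2 * (\<Sum>k. (cmod (x k))^2))"
    by (rule real_sqrt_le_mono)
  also have "\<dots> = M * l2_norm x" using M0 by (simp add: real_sqrt_mult l2_norm_def)
  finally show ?thesis using sd by (simp add: l2_def l2_norm_def)
qed

lemma diag_lower:
  assumes M: "\<And>k. cmod (d k) \<le> M"
  shows "cmod (d k) \<le> l2_op_norm (diag_op d)"
proof -
  define e where "e = (\<lambda>j. if j = k then (1::complex) else 0)"
  have ee: "(\<lambda>j. (cmod (e j))^2) = (\<lambda>j. if j = k then 1 else 0)"
    by (auto simp: e_def)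
  have el2: "e \<in> l2" unfolding l2_def mem_Collect_eq ee by (simp add: summable_single)
  have en: "l2_norm e = 1" unfolding l2_norm_def ee using sums_single[of k "\<lambda>_. 1::real", THEN sums_unique] by simp
  have de: "(\<lambda>j. (cmod (diag_op d e j))^2) = (\<lambda>j. if j = k then (cmod (d k))^2 else 0)"
    by (auto simp: e_def diag_op_def)
  have dn: "l2_norm (diag_op d e) = cmod (d k)"
    unfolding l2_norm_def de using sums_single[of k "\<lambda>_. (cmod (d k))^2", THEN sums_unique] by simp
  have bdd: "bdd_above ((\<lambda>x. l2_norm (diag_op d x)) ` {x \<in> l2. l2_norm x \<le> 1})"
  proof (rule bdd_aboveI2)
    fix x assume "x \<in> {x \<in> l2. l2_norm x \<le> 1}"
    then have x: "x \<in> l2" "l2_norm x \<le> 1" by auto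
    have M0: "M \<ge> 0" using M[of 0] norm_ge_zero order_trans by blast
    have "l2_norm (diag_op d x) \<le> M * l2_norm x" using diag_bound[OF M x(1)] by auto
    also have "\<dots> \<le> M * 1" using x(2) M0 by (intro mult_left_mono) auto
    finally show "l2_norm (diag_op d x) \<le> M" by simp
  qed
  show ?thesis unfolding l2_op_norm_def dn[symmetric]
    by (rule cSup_upper[OF _ bdd]) (use el2 en in auto)
qed

lemma norm_entry:
  fixes \<gamma> \<alpha> t :: real
  assumes "\<gamma> > 0"
  shows "cmod (exp (complex_of_real t / lam \<gamma> k) * (- lam \<gamma> k) powr (- complex_of_real \<alpha>))
     = exp (- t * \<gamma> / (\<gamma>^2 + (real k)^2)) * (\<gamma>^2 + (real k)^2) powr (- \<alpha> / 2)"
proof -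
  have n: "cmod (lam \<gamma> k) = sqrt (\<gamma>^2 + (real k)^2)"
    by (simp add: lam_def cmod_def)
  have re: "Re (complex_of_real t / lam \<gamma> k) = - t * \<gamma> / (\<gamma>^2 + (real k)^2)"
    by (simp add: Re_divide lam_def)
  have "cmod ((- lam \<gamma> k) powr (- complex_of_real \<alpha>)) = sqrt (\<gamma>^2 + (real k)^2) powr (- \<alpha>)"
    by (subst norm_powr_real_powr') (auto simp: n)
  also have "\<dots> = (\<gamma>^2 + (real k)^2) powr (- \<alpha> / 2)"
    by (simp add: powr_half_sqrt[symmetric] powr_powr)
  finally show ?thesis by (simp add: norm_mult re)
qed

lemma ratio_lim:
  fixes c \<gamma> :: real
  assumes c: "c > 0" and g: "\<gamma> > 0"
  shows "((\<lambda>t. t / (\<gamma>^2 + (real (nat \<lfloor>sqrt (c * t)\<rfloor>))^2)) \<longlongrightarrow> 1 / c) at_top"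
proof (rule tendsto_sandwich)
  define k where "k t = real (nat \<lfloor>sqrt (c * t)\<rfloor>)" for t
  have kb: "sqrt (c * t) - 1 \<le> k t \<and> k t \<le> sqrt (c * t)" if "t \<ge> 1 / c" for t
  proof -
    have "c * t \<ge> 1" using that c by (simp add: field_simps)
    then have "sqrt (c * t) \<ge> 1" by simp
    then show ?thesis unfolding k_def by linarith
  qed
  show "eventually (\<lambda>t. t / (\<gamma>^2 + c * t) \<le> t / (\<gamma>^2 + (real (nat \<lfloor>sqrt (c * t)\<rfloor>))^2)) at_top"
    using eventually_ge_at_top[of "1 / c"]
  proof eventually_elim
    case (elim t)
    have t0: "t > 0" using elim c by (smt (verit) divide_pos_pos)
    have "k t ^ 2 \<le> sqrt (c * t) ^ 2" using kb[OF elim] by (intro power_mono) (auto simp: k_def)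
    also have "\<dots> = c * t" using t0 c by simp
    finally have "k t ^ 2 \<le> c * t" .
    then show ?case unfolding k_def[symmetric] using t0 g c
      by (intro divide_left_mono) (auto intro!: add_pos_nonneg mult_pos_pos)
  qed
  show "eventually (\<lambda>t. t / (\<gamma>^2 + (real (nat \<lfloor>sqrt (c * t)\<rfloor>))^2) \<le> t / (\<gamma>^2 + (sqrt (c * t) - 1)^2)) at_top"
    using eventually_ge_at_top[of "1 / c"]
  proof eventually_elim
    case (elim t)
    have t0: "t > 0" using elim c by (smt (verit) divide_pos_pos)
    have "c * t \<ge> 1" using elim c by (simp add: field_simps)
    then have "sqrt (c * t) \<ge> 1" by simp
    then have "(sqrt (c * t) - 1) ^ 2 \<le> k t ^ 2" using kb[OF elim] by (intro power_mono) auto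
    then show ?case unfolding k_def[symmetric] using t0 g c
      by (intro divide_left_mono) (auto intro!: add_pos_nonneg mult_pos_pos)
  qed
  show "((\<lambda>t. t / (\<gamma>^2 + c * t)) \<longlongrightarrow> 1 / c) at_top" using c g by (real_asymp simp: inverse_eq_divide)
  show "((\<lambda>t. t / (\<gamma>^2 + (sqrt (c * t) - 1)^2)) \<longlongrightarrow> 1 / c) at_top" using c g by (real_asymp simp: inverse_eq_divide powr_half_sqrt)
qed

theorem mainTheorem3:
  fixes \<gamma> \<alpha> :: real
  assumes "\<gamma> > 0" and "\<alpha> > 0"
  shows "Liminf at_top (\<lambda>t::real. ereal (t powr (\<alpha> / 2) * l2_op_norm (semigroup_frac_op \<gamma> \<alpha> t)))
           \<ge> ereal ((\<alpha> / (2 * exp 1 * \<gamma>)) powr (\<alpha> / 2))"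
proof -
  note g = assms(1) and a = assms(2)
  define c where "c = 2 * \<gamma> / \<alpha>"
  have c: "c > 0" using g a by (simp add: c_def)
  define kk where "kk t = nat \<lfloor>sqrt (c * t)\<rfloor>" for t
  define s where "s t = \<gamma>^2 + (real (kk t))^2" for t
  define d where "d t = (\<lambda>k. exp (complex_of_real t / lam \<gamma> k) * (- lam \<gamma> k) powr (- complex_of_real \<alpha>))" for t
  define h where "h r = exp (- \<gamma> * r) * r powr (\<alpha> / 2)" for r
  have s0: "s t > 0" for t using g by (simp add: s_def add_pos_nonneg)
  have M: "cmod (d t k) \<le> (\<gamma>^2) powr (- \<alpha> / 2)" if t: "t \<ge> 0" for t k
  proof -
    have "cmod (d t k) = exp (- t * \<gamma> / (\<gamma>^2 + (real k)^2)) * (\<gamma>^2 + (real k)^2) powr (- \<alpha> / 2)"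
      unfolding d_def by (rule norm_entry[OF g])
    also have "\<dots> \<le> 1 * (\<gamma>^2) powr (- \<alpha> / 2)"
    proof (rule mult_mono)
      show "exp (- t * \<gamma> / (\<gamma>^2 + (real k)^2)) \<le> 1"
        using t g by (simp add: add_pos_nonneg)
      show "(\<gamma>^2 + (real k)^2) powr (- \<alpha> / 2) \<le> (\<gamma>^2) powr (- \<alpha> / 2)"
        using a g by (intro powr_mono2') auto
    qed auto
    finally show ?thesis by simp
  qed
  have key: "h (t / s t) \<le> t powr (\<alpha> / 2) * l2_op_norm (semigroup_frac_op \<gamma> \<alpha> t)" if t: "t \<ge> 0" for t
  proof -
    have op: "semigroup_frac_op \<gamma> \<alpha> t = diag_op (d t)"
      by (simp add: semigroup_frac_op_def d_def)
    have lo: "cmod (d t (kk t)) \<le> l2_op_norm (diag_op (d t))"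
      by (rule diag_lower) (rule M[OF t])
    have ne: "cmod (d t (kk t)) = exp (- t * \<gamma> / s t) * s t powr (- \<alpha> / 2)"
      unfolding d_def s_def by (rule norm_entry[OF g])
    have "h (t / s t) = t powr (\<alpha> / 2) * cmod (d t (kk t))"
    proof -
      have "h (t / s t) = exp (- \<gamma> * (t / s t)) * (t powr (\<alpha> / 2) / s t powr (\<alpha> / 2))"
        unfolding h_def using t s0[of t] by (simp add: powr_divide)
      also have "\<dots> = t powr (\<alpha> / 2) * (exp (- t * \<gamma> / s t) * s t powr (- (\<alpha> / 2)))"
        by (simp add: powr_minus_divide field_simps)
      finally show ?thesis using ne by simp
    qed
    also have "\<dots> \<le> t powr (\<alpha> / 2) * l2_op_norm (diag_op (d t))"
      using lo by (intro mult_left_mono) auto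
    finally show ?thesis using op by simp
  qed
  have lim: "((\<lambda>t. h (t / s t)) \<longlongrightarrow> h (1 / c)) at_top"
  proof -
    have r: "((\<lambda>t. t / s t) \<longlongrightarrow> 1 / c) at_top"
      unfolding s_def kk_def by (rule ratio_lim[OF c g])
    show ?thesis unfolding h_def
      by (intro tendsto_intros r) (use c in auto)
  qed
  have hc: "h (1 / c) = (\<alpha> / (2 * exp 1 * \<gamma>)) powr (\<alpha> / 2)"
  proof -
    have "(\<alpha> / (2 * exp 1 * \<gamma>)) powr (\<alpha> / 2) = (\<alpha> / (2 * \<gamma>) / exp 1) powr (\<alpha> / 2)"
      by (simp add: field_simps)
    also have "\<dots> = (\<alpha> / (2 * \<gamma>)) powr (\<alpha> / 2) / exp 1 powr (\<alpha> / 2)"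
      using a g by (simp add: powr_divide powr_mult)
    also have "\<dots> = exp (- \<gamma> * (1 / c)) * (1 / c) powr (\<alpha> / 2)"
      using a g by (simp add: exp_powr_real c_def exp_minus field_simps)
    finally show ?thesis by (simp add: h_def)
  qed
  have "Liminf at_top (\<lambda>t. ereal (h (t / s t))) = ereal (h (1 / c))"
    by (rule lim_imp_Liminf) (auto intro: lim_imp_Liminf simp: lim)
  moreover have "Liminf at_top (\<lambda>t. ereal (h (t / s t))) \<le>
      Liminf at_top (\<lambda>t::real. ereal (t powr (\<alpha> / 2) * l2_op_norm (semigroup_frac_op \<gamma> \<alpha> t)))"
    by (rule Liminf_mono) (use eventually_mono[OF eventually_ge_at_top[of 0] key] in simp)
  ultimately show ?thesis using hc by simp
qed

end
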